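(* Let $N$ be a model and $A\subseteq N$, and let $N^+=(N,U_1,\dots,U_k)$ be an expansion of $N$ by finitely many unary predicates. Then $\mathrm{rtp}(N^+,A)\le\beth_{\omega+1}(\mathrm{rtp}(N,A))$.
   Context: For a structure $N$ and $A\subseteq N$, $\mathrm{rtp}(N,A)$ is the number of complete types over $A$ (in the language of $N$) realized by tuples in $(N\setminus A)^{<\omega}$. *)

theory Defs
  imports Main "HOL-Library.Equipollence"
begin

text \<open>First-order logic with equality over a signature with function symbols 'f and
relation symbols 'r (with arities), and parameters (names for elements) of type 'a.\<close>

datatype ('f, 'a) trm = Var nat | Par 'a | Fn 'f "('f, 'a) trm list"

datatype ('f, 'r, 'a) fm =
    Eq "('f, 'a) trm" "('f, 'a) trm"
  | Rl 'r "('f, 'a) trm list"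
  | Neg "('f, 'r, 'a) fm"
  | Conj "('f, 'r, 'a) fm" "('f, 'r, 'a) fm"
  | Ex nat "('f, 'r, 'a) fm"

record ('f, 'r, 'a) struc =
  sdom :: "'a set"
  fint :: "'f \<Rightarrow> 'a list \<Rightarrow> 'a"
  rint :: "'r \<Rightarrow> 'a list \<Rightarrow> bool"
  farity :: "'f \<Rightarrow> nat"
  rarity :: "'r \<Rightarrow> nat"

definition is_struc :: "('f, 'r, 'a) struc \<Rightarrow> bool" where
  "is_struc N \<longleftrightarrow> sdom N \<noteq> {} \<and>
     (\<forall>f xs. length xs = farity N f \<and> set xs \<subseteq> sdom N \<longrightarrow> fint N f xs \<in> sdom N)"

fun wft :: "('f, 'r, 'a) struc \<Rightarrow> 'a set \<Rightarrow> ('f, 'a) trm \<Rightarrow> bool" where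
  "wft N A (Var n) = True"
| "wft N A (Par a) = (a \<in> A)"
| "wft N A (Fn f ts) = (length ts = farity N f \<and> (\<forall>t\<in>set ts. wft N A t))"

fun wff :: "('f, 'r, 'a) struc \<Rightarrow> 'a set \<Rightarrow> ('f, 'r, 'a) fm \<Rightarrow> bool" where
  "wff N A (Eq s t) = (wft N A s \<and> wft N A t)"
| "wff N A (Rl r ts) = (length ts = rarity N r \<and> (\<forall>t\<in>set ts. wft N A t))"
| "wff N A (Neg p) = wff N A p"
| "wff N A (Conj p q) = (wff N A p \<and> wff N A q)"
| "wff N A (Ex n p) = wff N A p"

fun fvt :: "('f, 'a) trm \<Rightarrow> nat set" where
  "fvt (Var n) = {n}"
| "fvt (Par a) = {}"
| "fvt (Fn f ts) = (\<Union>t\<in>set ts. fvt t)"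

fun fvf :: "('f, 'r, 'a) fm \<Rightarrow> nat set" where
  "fvf (Eq s t) = fvt s \<union> fvt t"
| "fvf (Rl r ts) = (\<Union>t\<in>set ts. fvt t)"
| "fvf (Neg p) = fvf p"
| "fvf (Conj p q) = fvf p \<union> fvf q"
| "fvf (Ex n p) = fvf p - {n}"

fun evalt :: "('f, 'r, 'a) struc \<Rightarrow> (nat \<Rightarrow> 'a) \<Rightarrow> ('f, 'a) trm \<Rightarrow> 'a" where
  "evalt N e (Var n) = e n"
| "evalt N e (Par a) = a"
| "evalt N e (Fn f ts) = fint N f (map (evalt N e) ts)"

fun sat :: "('f, 'r, 'a) struc \<Rightarrow> (nat \<Rightarrow> 'a) \<Rightarrow> ('f, 'r, 'a) fm \<Rightarrow> bool" where
  "sat N e (Eq s t) = (evalt N e s = evalt N e t)"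
| "sat N e (Rl r ts) = rint N r (map (evalt N e) ts)"
| "sat N e (Neg p) = (\<not> sat N e p)"
| "sat N e (Conj p q) = (sat N e p \<and> sat N e q)"
| "sat N e (Ex n p) = (\<exists>x\<in>sdom N. sat N (e(n := x)) p)"

text \<open>The complete type over A of a finite tuple as (free variables x_0..x_{n-1}).\<close>
definition tp :: "('f, 'r, 'a) struc \<Rightarrow> 'a set \<Rightarrow> 'a list \<Rightarrow> ('f, 'r, 'a) fm set" where
  "tp N A as = {\<phi>. wff N A \<phi> \<and> fvf \<phi> \<subseteq> {..<length as} \<and> sat N (\<lambda>i. as ! i) \<phi>}"

text \<open>The set of complete types over A realized by tuples from (N - A)^{<omega};
  rtp(N,A) in the paper is the cardinality of this set.\<close>
definition rtp_set :: "('f, 'r, 'a) struc \<Rightarrow> 'a set \<Rightarrow> ('f, 'r, 'a) fm set set" where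
  "rtp_set N A = tp N A ` lists (sdom N - A)"

definition expand :: "('f, 'r, 'a) struc \<Rightarrow> ('k \<Rightarrow> 'a set) \<Rightarrow> ('f, 'r + 'k, 'a) struc" where
  "expand N U = \<lparr> sdom = sdom N, fint = fint N,
      rint = (\<lambda>s xs. case s of Inl r \<Rightarrow> rint N r xs | Inr k \<Rightarrow> hd xs \<in> U k),
      farity = farity N,
      rarity = (\<lambda>s. case s of Inl r \<Rightarrow> rarity N r | Inr k \<Rightarrow> 1) \<rparr>"

end

theory Submission
  imports Defs
begin

fun substt :: "nat \<Rightarrow> 'a \<Rightarrow> ('f, 'a) trm \<Rightarrow> ('f, 'a) trm" where
  "substt v a (Var n) = (if n = v then Par a else Var n)"
| "substt v a (Par b) = Par b"
| "substt v a (Fn f ts) = Fn f (map (substt v a) ts)"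

fun substf :: "nat \<Rightarrow> 'a \<Rightarrow> ('f, 'r, 'a) fm \<Rightarrow> ('f, 'r, 'a) fm" where
  "substf v a (Eq s t) = Eq (substt v a s) (substt v a t)"
| "substf v a (Rl r ts) = Rl r (map (substt v a) ts)"
| "substf v a (Neg p) = Neg (substf v a p)"
| "substf v a (Conj p q) = Conj (substf v a p) (substf v a q)"
| "substf v a (Ex n p) = (if n = v then Ex n p else Ex n (substf v a p))"

fun fsz :: "('f, 'r, 'a) fm \<Rightarrow> nat" where
  "fsz (Eq s t) = 1"
| "fsz (Rl r ts) = 1"
| "fsz (Neg p) = Suc (fsz p)"
| "fsz (Conj p q) = Suc (fsz p + fsz q)"
| "fsz (Ex n p) = Suc (fsz p)"

fun bv :: "('f, 'r, 'a) fm \<Rightarrow> nat set" where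
  "bv (Eq s t) = {}"
| "bv (Rl r ts) = {}"
| "bv (Neg p) = bv p"
| "bv (Conj p q) = bv p \<union> bv q"
| "bv (Ex n p) = insert n (bv p)"

fun rk :: "('f, 'r + 'k, 'a) fm \<Rightarrow> nat" where
  "rk (Eq s t) = 0"
| "rk (Rl r ts) = (case r of Inl _ \<Rightarrow> 0 | Inr _ \<Rightarrow> 1)"
| "rk (Neg p) = rk p"
| "rk (Conj p q) = max (rk p) (rk q)"
| "rk (Ex n p) = Suc (rk p)"

lemma evalt_substt: "evalt N e (substt v a t) = evalt N (e(v:=a)) t"
  by (induction t) (auto cong: map_cong)

lemma sat_substf: "sat N e (substf v a p) = sat N (e(v:=a)) p"
  by (induction p arbitrary: e) (auto simp: evalt_substt comp_def fun_upd_twist)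

lemma wft_substt: "wft N A t \<Longrightarrow> a \<in> A \<Longrightarrow> wft N A (substt v a t)"
  by (induction t) (auto cong: map_cong)

lemma wff_substf: "wff N A p \<Longrightarrow> a \<in> A \<Longrightarrow> wff N A (substf v a p)"
  by (induction p) (auto simp: wft_substt)

lemma fvt_substt: "fvt (substt v a t) = fvt t - {v}"
  by (induction t) (auto cong: map_cong)

lemma fvf_substf: "fvf (substf v a p) = fvf p - {v}"
  by (induction p) (auto simp: fvt_substt)

lemma fsz_substf: "fsz (substf v a p) = fsz p"
  by (induction p) auto

lemma rk_substf: "rk (substf v a p) = rk p"
  by (induction p) auto

lemma bv_substf: "bv (substf v a p) \<subseteq> bv p"
  by (induction p) auto

lemma finite_bv: "finite (bv p)"
  by (induction p) auto

lemma evalt_agree: "(\<forall>x\<in>fvt t. e x = e' x) \<Longrightarrow> evalt N e t = evalt N e' t"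
  by (induction t) (auto cong: map_cong)

lemma sat_agree: "(\<forall>x\<in>fvf p. e x = e' x) \<Longrightarrow> sat N e p = sat N e' p"
proof (induction p arbitrary: e e')
  case (Eq s t) then show ?case using evalt_agree[of s e e' N] evalt_agree[of t e e' N] by auto
next
  case (Rl r ts)
  have "map (evalt N e) ts = map (evalt N e') ts"
    by (rule map_cong[OF refl], rule evalt_agree) (use Rl in auto)
  then show ?case by (metis sat.simps(2))
next
  case (Conj p q)
  have "sat N e p = sat N e' p" using Conj.prems by (intro Conj.IH(1)) auto
  moreover have "sat N e q = sat N e' q" using Conj.prems by (intro Conj.IH(2)) auto
  ultimately show ?case by simp
next
  case (Ex n p)
  have "\<And>x. sat N (e(n:=x)) p = sat N (e'(n:=x)) p"
    using Ex.prems by (intro Ex.IH) auto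
  then show ?case by simp
qed auto

lemma evalt_closed:
  assumes "is_struc N" "A \<subseteq> sdom N"
  shows "wft N A t \<Longrightarrow> (\<forall>x\<in>fvt t. e x \<in> sdom N) \<Longrightarrow> evalt N e t \<in> sdom N"
proof (induction t)
  case (Fn f ts)
  have "set (map (evalt N e) ts) \<subseteq> sdom N" using Fn by auto
  then show ?case using assms(1) Fn.prems unfolding is_struc_def by auto
qed (use assms in auto)

lemma expand_simps[simp]:
  "sdom (expand N U) = sdom N" "fint (expand N U) = fint N" "farity (expand N U) = farity N"
  "rint (expand N U) (Inl r) = rint N r" "rint (expand N U) (Inr k) xs = (hd xs \<in> U k)"
  "rarity (expand N U) (Inl r) = rarity N r" "rarity (expand N U) (Inr k) = 1"
  by (auto simp: expand_def)

lemma evalt_expand: "evalt (expand N U) e t = evalt N e t"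
  by (induction t) (auto cong: map_cong)

lemma evalt_expand': "evalt (expand N U) = evalt N"
  by (intro ext) (rule evalt_expand)

lemma wft_expand: "wft (expand N U) A t = wft N A t"
  by (induction t) (auto cong: map_cong)

definition tpV :: "('f, 'r, 'a) struc \<Rightarrow> 'a set \<Rightarrow> nat set \<Rightarrow> (nat \<Rightarrow> 'a) \<Rightarrow> ('f, 'r, 'a) fm set" where
  "tpV N A V e = {\<phi>. wff N A \<phi> \<and> fvf \<phi> \<subseteq> V \<and> sat N e \<phi>}"

definition E0 :: "('f, 'r, 'a) struc \<Rightarrow> 'a set \<Rightarrow> ('k \<Rightarrow> 'a set) \<Rightarrow> nat set \<Rightarrow> (nat \<Rightarrow> 'a) \<Rightarrow> (nat \<Rightarrow> 'a) \<Rightarrow> bool" where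
  "E0 N A U V e e' \<longleftrightarrow> tpV N A V e = tpV N A V e' \<and> (\<forall>k. \<forall>v\<in>V. (e v \<in> U k) = (e' v \<in> U k))"

fun Er :: "('f, 'r, 'a) struc \<Rightarrow> 'a set \<Rightarrow> ('k \<Rightarrow> 'a set) \<Rightarrow> nat \<Rightarrow> nat \<Rightarrow> nat set \<Rightarrow> (nat \<Rightarrow> 'a) \<Rightarrow> (nat \<Rightarrow> 'a) \<Rightarrow> bool" where
  "Er N A U w 0 V e e' = E0 N A U V e e'"
| "Er N A U w (Suc n) V e e' = (E0 N A U V e e' \<and>
     (\<forall>v<w. \<forall>x\<in>sdom N - A. \<exists>x'\<in>sdom N - A. Er N A U w n (insert v V) (e(v:=x)) (e'(v:=x'))) \<and>
     (\<forall>v<w. \<forall>x'\<in>sdom N - A. \<exists>x\<in>sdom N - A. Er N A U w n (insert v V) (e(v:=x)) (e'(v:=x'))))"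

lemma Er_E0: "Er N A U w n V e e' \<Longrightarrow> E0 N A U V e e'"
  by (cases n) auto

lemma tpV_iff: "E0 N A U V e e' \<Longrightarrow> wff N A \<psi> \<Longrightarrow> fvf \<psi> \<subseteq> V \<Longrightarrow> sat N e \<psi> = sat N e' \<psi>"
  unfolding E0_def tpV_def by (metis (mono_tags, lifting) mem_Collect_eq)

lemma sem:
  assumes "is_struc N" "A \<subseteq> sdom N"
  shows "wff (expand N U) A \<phi> \<Longrightarrow> fvf \<phi> \<subseteq> V \<Longrightarrow> finite V \<Longrightarrow> V \<subseteq> {..<w} \<Longrightarrow> bv \<phi> \<subseteq> {..<w}
    \<Longrightarrow> card V + rk \<phi> < w \<Longrightarrow> rk \<phi> \<le> n \<Longrightarrow> \<forall>x\<in>V. e x \<in> sdom N \<Longrightarrow> \<forall>x\<in>V. e' x \<in> sdom N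
    \<Longrightarrow> Er N A U w n V e e' \<Longrightarrow> sat (expand N U) e \<phi> = sat (expand N U) e' \<phi>"
proof (induction "fsz \<phi>" arbitrary: \<phi> V n e e' rule: less_induct)
  case less
  note L = less.prems
  have E0: "E0 N A U V e e'" using L(10) by (rule Er_E0)
  show ?case
  proof (cases \<phi>)
    case (Eq s t)
    have "wff N A (Eq s t)" using L(1) Eq by (simp add: wft_expand)
    then have "sat N e (Eq s t) = sat N e' (Eq s t)" using E0 L(2) Eq by (intro tpV_iff) auto
    then show ?thesis using Eq by (simp add: evalt_expand)
  next
    case (Rl r ts)
    show ?thesis
    proof (cases r)
      case (Inl r')
      have "wff N A (Rl r' ts)" using L(1) Rl Inl by (simp add: wft_expand)
      then have "sat N e (Rl r' ts) = sat N e' (Rl r' ts)" using E0 L(2) Rl by (intro tpV_iff) auto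
      then show ?thesis using Rl Inl by (simp add: evalt_expand')
    next
      case (Inr k)
      obtain t where ts: "ts = [t]" using L(1) Rl Inr by (auto simp: length_Suc_conv)
      have wt: "wft N A t" using L(1) Rl Inr ts by (simp add: wft_expand)
      have fvt: "fvt t \<subseteq> V" using L(2) Rl ts by auto
      obtain m where n: "n = Suc m" using L(7) Rl Inr by (cases n) auto
      define y where "y = evalt N e t"
      have yD: "y \<in> sdom N" unfolding y_def using evalt_closed[OF assms wt] fvt L(8) by auto
      have sat_eq: "sat (expand N U) e \<phi> = (y \<in> U k)" using Rl Inr ts by (simp add: evalt_expand y_def)
      have sat_eq': "sat (expand N U) e' \<phi> = (evalt N e' t \<in> U k)" using Rl Inr ts by (simp add: evalt_expand)
      show ?thesis
      proof (cases "y \<in> A")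
        case True
        have "wff N A (Eq t (Par y))" using wt True by simp
        then have "sat N e (Eq t (Par y)) = sat N e' (Eq t (Par y))" using E0 fvt by (intro tpV_iff) auto
        then have "evalt N e' t = y" by (simp add: y_def)
        then show ?thesis using sat_eq sat_eq' by simp
      next
        case False
        have "card V < w" using L(6) Rl Inr by simp
        have "\<not> {..<w} \<subseteq> V"
        proof
          assume "{..<w} \<subseteq> V"
          then have "V = {..<w}" using L(4) by auto
          then show False using \<open>card V < w\<close> by simp
        qed
        then obtain u where u: "u < w" "u \<notin> V" by auto
        from L(10)[unfolded n] have "\<forall>v<w. \<forall>x\<in>sdom N - A. \<exists>x'\<in>sdom N - A. Er N A U w m (insert v V) (e(v:=x)) (e'(v:=x'))"
          by simp
        then obtain y' where y': "y' \<in> sdom N - A" "Er N A U w m (insert u V) (e(u:=y)) (e'(u:=y'))"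
          using u yD False by blast
        have E0': "E0 N A U (insert u V) (e(u:=y)) (e'(u:=y'))" using y'(2) by (rule Er_E0)
        have ut: "u \<notin> fvt t" using u fvt by auto
        have a1: "evalt N (e(u:=y)) t = evalt N e t" by (rule evalt_agree) (use ut in auto)
        have a2: "evalt N (e'(u:=y')) t = evalt N e' t" by (rule evalt_agree) (use ut in auto)
        have "sat N (e(u:=y)) (Eq (Var u) t) = sat N (e'(u:=y')) (Eq (Var u) t)"
          using E0' fvt wt by (intro tpV_iff) auto
        then have "y' = evalt N e' t" using a1 a2 by (simp add: y_def)
        moreover have "(y \<in> U k) = (y' \<in> U k)" using E0' unfolding E0_def by (metis fun_upd_same insertI1)
        ultimately show ?thesis using sat_eq sat_eq' by simp
      qed
    qed
  next
    case (Neg p)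
    have "sat (expand N U) e p = sat (expand N U) e' p"
      by (rule less.hyps) (use L Neg in auto)
    then show ?thesis using Neg by simp
  next
    case (Conj p q)
    have "sat (expand N U) e p = sat (expand N U) e' p"
      by (rule less.hyps) (use L Conj in auto)
    moreover have "sat (expand N U) e q = sat (expand N U) e' q"
      by (rule less.hyps) (use L Conj in auto)
    ultimately show ?thesis using Conj by simp
  next
    case (Ex v p)
    obtain m where n: "n = Suc m" using L(7) Ex by (cases n) auto
    have fw: "\<forall>x\<in>sdom N - A. \<exists>x'\<in>sdom N - A. Er N A U w m (insert v V) (e(v:=x)) (e'(v:=x'))"
      and bw: "\<forall>x'\<in>sdom N - A. \<exists>x\<in>sdom N - A. Er N A U w m (insert v V) (e(v:=x)) (e'(v:=x'))"
      using L(10) L(5) Ex n by auto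
    have cardI: "card (insert v V) \<le> Suc (card V)" using L(3) by (simp add: card_insert_if)
    have IH1: "sat (expand N U) (e(v:=x)) p = sat (expand N U) (e'(v:=x')) p"
      if "x \<in> sdom N" "x' \<in> sdom N" "Er N A U w m (insert v V) (e(v:=x)) (e'(v:=x'))" for x x'
      by (rule less.hyps[of p "insert v V" m]) (use L Ex that cardI n in auto)
    have IH2: "sat (expand N U) e (substf v x p) = sat (expand N U) e' (substf v x p)"
      if "x \<in> A" for x
      by (rule less.hyps[of "substf v x p" V n])
        (use L Ex that in \<open>auto simp: fsz_substf rk_substf fvf_substf wff_substf dest: bv_substf[THEN subsetD]\<close>)
    show ?thesis
    proof
      assume "sat (expand N U) e \<phi>"
      then obtain x where x: "x \<in> sdom N" "sat (expand N U) (e(v:=x)) p" using Ex by auto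
      show "sat (expand N U) e' \<phi>"
      proof (cases "x \<in> A")
        case True
        then have "sat (expand N U) e' (substf v x p)" using IH2 x by (simp add: sat_substf)
        then show ?thesis using Ex x assms(2) True by (auto simp: sat_substf)
      next
        case False
        then obtain x' where x': "x' \<in> sdom N - A" "Er N A U w m (insert v V) (e(v:=x)) (e'(v:=x'))"
          using fw x by blast
        then show ?thesis using IH1[of x x'] x Ex by auto
      qed
    next
      assume "sat (expand N U) e' \<phi>"
      then obtain x' where x': "x' \<in> sdom N" "sat (expand N U) (e'(v:=x')) p" using Ex by auto
      show "sat (expand N U) e \<phi>"
      proof (cases "x' \<in> A")
        case True
        then have "sat (expand N U) e (substf v x' p)" using IH2 x' by (simp add: sat_substf)
        then show ?thesis using Ex x' assms(2) True by (auto simp: sat_substf)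
      next
        case False
        then obtain x where x: "x \<in> sdom N - A" "Er N A U w m (insert v V) (e(v:=x)) (e'(v:=x'))"
          using bw x' by blast
        then show ?thesis using IH1[of x x'] x' Ex by auto
      qed
    qed
  qed
qed

lemma Er_refl: "Er N A U w n V e e"
  by (induction n arbitrary: V e) (auto simp: E0_def)

lemma Er_sym: "Er N A U w n V e e' \<Longrightarrow> Er N A U w n V e' e"
proof (induction n arbitrary: V e e')
  case 0 then show ?case by (auto simp: E0_def)
next
  case (Suc n)
  then show ?case by (simp add: E0_def) blast
qed

lemma Er_trans: "Er N A U w n V e1 e2 \<Longrightarrow> Er N A U w n V e2 e3 \<Longrightarrow> Er N A U w n V e1 e3"
proof (induction n arbitrary: V e1 e2 e3)
  case 0 then show ?case by (auto simp: E0_def)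
next
  case (Suc n)
  have E: "E0 N A U V e1 e3" using Suc.prems by (auto simp: E0_def)
  have F: "\<forall>v<w. \<forall>x\<in>sdom N - A. \<exists>x'\<in>sdom N - A. Er N A U w n (insert v V) (e1(v:=x)) (e3(v:=x'))"
  proof (intro allI impI ballI)
    fix v x assume "v < w" "x \<in> sdom N - A"
    then obtain y where "y \<in> sdom N - A" "Er N A U w n (insert v V) (e1(v:=x)) (e2(v:=y))" using Suc.prems(1) by (simp only: Er.simps) blast
    moreover obtain z where "z \<in> sdom N - A" "Er N A U w n (insert v V) (e2(v:=y)) (e3(v:=z))"
      using Suc.prems(2) \<open>v < w\<close> calculation(1) by (simp only: Er.simps) blast
    ultimately show "\<exists>x'\<in>sdom N - A. Er N A U w n (insert v V) (e1(v:=x)) (e3(v:=x'))" using Suc.IH by blast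
  qed
  have B: "\<forall>v<w. \<forall>x'\<in>sdom N - A. \<exists>x\<in>sdom N - A. Er N A U w n (insert v V) (e1(v:=x)) (e3(v:=x'))"
  proof (intro allI impI ballI)
    fix v z assume "v < w" "z \<in> sdom N - A"
    then obtain y where "y \<in> sdom N - A" "Er N A U w n (insert v V) (e2(v:=y)) (e3(v:=z))" using Suc.prems(2) by (simp only: Er.simps) blast
    moreover obtain x where "x \<in> sdom N - A" "Er N A U w n (insert v V) (e1(v:=x)) (e2(v:=y))"
      using Suc.prems(1) \<open>v < w\<close> calculation(1) by (simp only: Er.simps) blast
    ultimately show "\<exists>x\<in>sdom N - A. Er N A U w n (insert v V) (e1(v:=x)) (e3(v:=z))" using Suc.IH by blast
  qed
  show ?case using E F B by simp
qed

definition cls :: "('f, 'r, 'a) struc \<Rightarrow> 'a set \<Rightarrow> ('k \<Rightarrow> 'a set) \<Rightarrow> nat \<Rightarrow> nat \<Rightarrow> nat set \<Rightarrow> (nat \<Rightarrow> 'a) \<Rightarrow> (nat \<Rightarrow> 'a) set" where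
  "cls N A U w n V e = {e''. Er N A U w n V e e''}"

lemma cls_eq_iff: "cls N A U w n V e = cls N A U w n V e' \<longleftrightarrow> Er N A U w n V e e'"
proof
  assume "cls N A U w n V e = cls N A U w n V e'"
  then have "e' \<in> cls N A U w n V e" by (simp add: cls_def Er_refl)
  then show "Er N A U w n V e e'" by (simp add: cls_def)
next
  assume "Er N A U w n V e e'"
  then show "cls N A U w n V e = cls N A U w n V e'"
    unfolding cls_def using Er_sym Er_trans by blast
qed

definition CC :: "('f, 'r, 'a) struc \<Rightarrow> 'a set \<Rightarrow> ('k \<Rightarrow> 'a set) \<Rightarrow> nat \<Rightarrow> nat \<Rightarrow> nat set \<Rightarrow> (nat \<Rightarrow> 'a) set set" where
  "CC N A U w n V = cls N A U w n V ` {e. \<forall>x\<in>V. e x \<in> sdom N - A}"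

lemma lepoll_determ:
  assumes "\<And>x y. x \<in> X \<Longrightarrow> y \<in> X \<Longrightarrow> g x = g y \<Longrightarrow> f x = f y"
  shows "f ` X \<lesssim> g ` X"
proof -
  have "inj_on (g \<circ> inv_into X f) (f ` X)"
  proof (rule inj_onI)
    fix a b assume "a \<in> f ` X" "b \<in> f ` X" "(g \<circ> inv_into X f) a = (g \<circ> inv_into X f) b"
    then obtain x y where xy: "x \<in> X" "y \<in> X" "a = f x" "b = f y" "g (inv_into X f (f x)) = g (inv_into X f (f y))" by auto
    have "f (inv_into X f (f x)) = f (inv_into X f (f y))"
      by (rule assms) (use xy in \<open>auto intro: inv_into_into\<close>)
    then show "a = b" using xy by (simp add: f_inv_into_f)
  qed
  moreover have "(g \<circ> inv_into X f) ` (f ` X) \<subseteq> g ` X" by (auto intro: inv_into_into)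
  ultimately show ?thesis unfolding lepoll_def by blast
qed

lemma list_for_assignment:
  assumes "finite V" "\<forall>x\<in>V. e x \<in> D"
  shows "\<exists>b\<in>lists D. \<forall>i\<in>V. i < length b \<and> b ! i = e i"
proof (cases "V = {}")
  case True then show ?thesis by auto
next
  case False
  then obtain v0 where "v0 \<in> V" by auto
  define b where "b = map (\<lambda>i. if i \<in> V then e i else e v0) [0..<Suc (Max V)]"
  have "b \<in> lists D" using assms \<open>v0 \<in> V\<close> by (auto simp: b_def)
  moreover have "\<forall>i\<in>V. i < length b \<and> b ! i = e i"
    using assms(1) by (auto simp: b_def less_Suc_eq_le nth_append simp del: upt_Suc)
  ultimately show ?thesis by blast
qed

lemma tpV_lepoll:
  assumes "finite V"
  shows "tpV N A V ` {e. \<forall>x\<in>V. e x \<in> sdom N - A} \<lesssim> rtp_set N A"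
proof -
  have "tpV N A V ` {e. \<forall>x\<in>V. e x \<in> sdom N - A} \<subseteq> (\<lambda>\<tau>. {\<phi>\<in>\<tau>. fvf \<phi> \<subseteq> V}) ` rtp_set N A"
  proof
    fix T assume "T \<in> tpV N A V ` {e. \<forall>x\<in>V. e x \<in> sdom N - A}"
    then obtain e where e: "\<forall>x\<in>V. e x \<in> sdom N - A" "T = tpV N A V e" by auto
    obtain b where b: "b \<in> lists (sdom N - A)" "\<forall>i\<in>V. i < length b \<and> b ! i = e i"
      using list_for_assignment[OF assms e(1)] by blast
    have "T = {\<phi>\<in>tp N A b. fvf \<phi> \<subseteq> V}"
    proof -
      have "sat N e \<phi> = sat N (\<lambda>i. b ! i) \<phi>" if "fvf \<phi> \<subseteq> V" for \<phi>
        by (rule sat_agree) (use that b in auto)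
      moreover have "fvf \<phi> \<subseteq> V \<Longrightarrow> fvf \<phi> \<subseteq> {..<length b}" for \<phi> using b by auto
      ultimately show ?thesis unfolding e(2) tpV_def tp_def by auto
    qed
    then show "T \<in> (\<lambda>\<tau>. {\<phi>\<in>\<tau>. fvf \<phi> \<subseteq> V}) ` rtp_set N A"
      using b(1) unfolding rtp_set_def by blast
  qed
  then show ?thesis by (rule subset_image_lepoll)
qed

lemma Pow_lepoll_mono: "X \<lesssim> Y \<Longrightarrow> Pow X \<lesssim> Pow Y"
proof -
  assume "X \<lesssim> Y"
  then obtain f where f: "inj_on f X" "f ` X \<subseteq> Y" unfolding lepoll_def by blast
  have "inj_on (image f) (Pow X)" using f(1) by (rule inj_on_image_Pow)
  moreover have "image f ` Pow X \<subseteq> Pow Y" using f(2) by auto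
  ultimately show ?thesis unfolding lepoll_def by blast
qed

lemma kur_inj:
  assumes h: "{{a},{a,b}} = {{c},{c,d}}" shows "a = c \<and> b = d"
proof -
  have "{a} \<in> {{c},{c,d}}" using h by blast
  then have ac: "a = c" by auto
  have "{a,b} \<in> {{c},{c,d}}" using h by blast
  moreover have "{c,d} \<in> {{a},{a,b}}" using h by blast
  ultimately have "b = d" using ac by auto
  then show ?thesis using ac by simp
qed

lemma kur_lepoll: "X \<times> X \<lesssim> Pow (Pow X)"
proof -
  have "inj_on (\<lambda>(a, b). {{a}, {a, b}}) (X \<times> X)"
    by (auto simp: inj_on_def dest: kur_inj)
  moreover have "(\<lambda>(a, b). {{a}, {a, b}}) ` (X \<times> X) \<subseteq> Pow (Pow X)" by auto
  ultimately show ?thesis unfolding lepoll_def by blast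
qed

definition small :: "(nat \<Rightarrow> 'u set) \<Rightarrow> 'b set \<Rightarrow> bool" where
  "small S X \<longleftrightarrow> (\<exists>j. X \<lesssim> S j)"

context
  fixes S :: "nat \<Rightarrow> 'u set"
  assumes hS: "\<forall>n. S (Suc n) \<approx> Pow (S n)"
begin

lemma S_Suc: "Pow (S j) \<lesssim> S (Suc j)"
  using hS eqpoll_imp_lepoll eqpoll_sym by blast

lemma S_mono: "j \<le> j' \<Longrightarrow> S j \<lesssim> S j'"
proof (induction j' rule: dec_induct)
  case (step n)
  then show ?case using lepoll_trans[OF lepoll_Pow_self S_Suc] lepoll_trans by blast
qed simp

lemma S_Pow: "X \<lesssim> S j \<Longrightarrow> Pow X \<lesssim> S (Suc j)"
  using Pow_lepoll_mono S_Suc lepoll_trans by blast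

lemma S_times: "X \<lesssim> S j \<Longrightarrow> Y \<lesssim> S j \<Longrightarrow> X \<times> Y \<lesssim> S (Suc (Suc j))"
proof -
  assume "X \<lesssim> S j" "Y \<lesssim> S j"
  then have "X \<times> Y \<lesssim> S j \<times> S j" by (rule times_lepoll_mono)
  also have "\<dots> \<lesssim> Pow (Pow (S j))" by (rule kur_lepoll)
  also have "\<dots> \<lesssim> S (Suc (Suc j))" using S_Pow S_Suc lepoll_refl by blast
  finally show ?thesis .
qed

lemma small_mono: "X \<lesssim> Y \<Longrightarrow> small S Y \<Longrightarrow> small S X"
  unfolding small_def using lepoll_trans by blast

lemma small_times: "small S X \<Longrightarrow> small S Y \<Longrightarrow> small S (X \<times> Y)"
proof -
  assume "small S X" "small S Y"
  then obtain i j where "X \<lesssim> S i" "Y \<lesssim> S j" unfolding small_def by blast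
  then have "X \<lesssim> S (max i j)" "Y \<lesssim> S (max i j)" using S_mono lepoll_trans
    by (meson max.cobounded1 max.cobounded2)+
  then show ?thesis unfolding small_def using S_times by blast
qed

lemma small_Pow: "small S X \<Longrightarrow> small S (Pow X)"
  unfolding small_def using S_Pow by blast

lemma small_lessThan: "small S {..<n::nat}"
proof (induction n)
  case 0 then show ?case by (simp add: small_def)
next
  case (Suc n)
  have "inj_on (\<lambda>i. {..<i}) {..<Suc n}" by (auto simp: inj_on_def)
  moreover have "(\<lambda>i. {..<i}) ` {..<Suc n} \<subseteq> Pow {..<n}" by auto
  ultimately have "{..<Suc n} \<lesssim> Pow {..<n}" unfolding lepoll_def by blast
  then show ?case using small_mono small_Pow Suc by blast
qed

lemma small_finite: "finite X \<Longrightarrow> small S X"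
  using small_mono[of X "{..<card X}"] small_lessThan eqpoll_imp_lepoll eqpoll_iff_finite_card by blast

lemma small_Sigma:
  assumes "finite I" "\<forall>i\<in>I. small S (Y i)"
  shows "small S (Sigma I Y)"
proof -
  obtain jf where jf: "\<forall>i\<in>I. Y i \<lesssim> S (jf i)" using assms(2) unfolding small_def by metis
  define J where "J = Max (insert 0 (jf ` I))"
  have "\<forall>i\<in>I. Y i \<lesssim> S J"
  proof
    fix i assume "i \<in> I"
    then have "jf i \<le> J" unfolding J_def using assms(1) by (intro Max_ge) auto
    then show "Y i \<lesssim> S J" using jf \<open>i \<in> I\<close> S_mono lepoll_trans by blast
  qed
  then have "Sigma I Y \<lesssim> Sigma I (\<lambda>_. S J)" by (intro Sigma_lepoll_mono) auto
  moreover have "small S (I \<times> S J)" using small_times small_finite[OF assms(1)]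
    by (metis lepoll_refl small_def)
  ultimately show ?thesis using small_mono by blast
qed

lemma CC0_small:
  fixes U :: "'k::finite \<Rightarrow> 'a set"
  assumes "finite V" "S 0 \<approx> rtp_set N A"
  shows "small S (CC N A U w 0 V)"
proof -
  let ?D = "{e. \<forall>x\<in>V. e x \<in> sdom N - A}"
  let ?g = "\<lambda>e. (tpV N A V e, {(k, v). v \<in> V \<and> e v \<in> U k})"
  have c: "CC N A U w 0 V \<lesssim> ?g ` ?D"
    unfolding CC_def
  proof (rule lepoll_determ)
    fix x y assume "?g x = ?g y"
    then have "E0 N A U V x y" unfolding E0_def by (auto simp: set_eq_iff)
    then show "cls N A U w 0 V x = cls N A U w 0 V y" by (simp add: cls_eq_iff)
  qed
  have b: "?g ` ?D \<subseteq> (tpV N A V ` ?D) \<times> Pow (UNIV \<times> V)" by auto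
  have s1: "small S (tpV N A V ` ?D)"
    unfolding small_def using lepoll_trans2[OF tpV_lepoll[OF assms(1), of N A] eqpoll_sym[OF assms(2)]] by blast
  have s2: "small S (Pow ((UNIV :: 'k set) \<times> V))" using assms(1) by (intro small_finite) auto
  have a: "small S (tpV N A V ` ?D \<times> Pow ((UNIV :: 'k set) \<times> V))" by (rule small_times[OF s1 s2])
  have "small S (?g ` ?D)" by (rule small_mono[OF subset_imp_lepoll[OF b] a])
  then show ?thesis by (rule small_mono[OF c])
qed

lemma CC_small:
  fixes U :: "'k::finite \<Rightarrow> 'a set"
  assumes "S 0 \<approx> rtp_set N A"
  shows "finite V \<Longrightarrow> small S (CC N A U w n V)"
proof (induction n arbitrary: V)
  case 0 then show ?case using CC0_small assms by blast
next
  case (Suc n)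
  let ?D = "{e. \<forall>x\<in>V. e x \<in> sdom N - A}"
  let ?g = "\<lambda>e. (cls N A U w 0 V e, {(v, cls N A U w n (insert v V) (e(v:=x))) | v x. v < w \<and> x \<in> sdom N - A})"
  have c: "CC N A U w (Suc n) V \<lesssim> ?g ` ?D"
    unfolding CC_def
  proof (rule lepoll_determ)
    fix x y assume g: "?g x = ?g y"
    then have "E0 N A U V x y" by (simp add: cls_eq_iff)
    moreover have "\<forall>v<w. \<forall>a\<in>sdom N - A. \<exists>a'\<in>sdom N - A. Er N A U w n (insert v V) (x(v:=a)) (y(v:=a'))"
    proof (intro allI impI ballI)
      fix v a assume "v < w" "a \<in> sdom N - A"
      then have "(v, cls N A U w n (insert v V) (x(v:=a))) \<in> snd (?g y)" using g
        by (metis (mono_tags, lifting) mem_Collect_eq snd_conv)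
      then show "\<exists>a'\<in>sdom N - A. Er N A U w n (insert v V) (x(v:=a)) (y(v:=a'))"
        by (auto simp: cls_eq_iff)
    qed
    moreover have "\<forall>v<w. \<forall>a'\<in>sdom N - A. \<exists>a\<in>sdom N - A. Er N A U w n (insert v V) (x(v:=a)) (y(v:=a'))"
    proof (intro allI impI ballI)
      fix v a' assume "v < w" "a' \<in> sdom N - A"
      then have "(v, cls N A U w n (insert v V) (y(v:=a'))) \<in> snd (?g x)" using g
        by (metis (mono_tags, lifting) mem_Collect_eq snd_conv)
      then show "\<exists>a\<in>sdom N - A. Er N A U w n (insert v V) (x(v:=a)) (y(v:=a'))"
        by (auto simp: cls_eq_iff dest: Er_sym)
    qed
    ultimately have "Er N A U w (Suc n) V x y" by simp
    then show "cls N A U w (Suc n) V x = cls N A U w (Suc n) V y" by (simp add: cls_eq_iff)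
  qed
  have b: "?g ` ?D \<subseteq> CC N A U w 0 V \<times> Pow (SIGMA v:{..<w}. CC N A U w n (insert v V))"
    unfolding CC_def by auto
  have s1: "small S (CC N A U w 0 V)" using CC0_small assms Suc.prems by blast
  have s2: "small S (SIGMA v:{..<w}. CC N A U w n (insert v V))"
    using Suc by (intro small_Sigma) auto
  have a: "small S (CC N A U w 0 V \<times> Pow (SIGMA v:{..<w}. CC N A U w n (insert v V)))"
    by (rule small_times[OF s1 small_Pow[OF s2]])
  have "small S (?g ` ?D)" by (rule small_mono[OF subset_imp_lepoll[OF b] a])
  then show ?case by (rule small_mono[OF c])
qed

end


fun iota :: "(nat \<Rightarrow> nat) \<Rightarrow> nat \<Rightarrow> nat" where
  "iota j 0 = j 0"
| "iota j (Suc p) = max (j (Suc p)) (Suc (iota j p))"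

lemma iota_ge: "j p \<le> iota j p"
  by (cases p) auto

lemma iota_smono: "strict_mono (iota j)"
  unfolding strict_mono_Suc_iff by auto

lemma all_Er_tp:
  assumes "is_struc N" "A \<subseteq> sdom N"
    and b: "b1 \<in> lists (sdom N - A)" "b2 \<in> lists (sdom N - A)" "length b1 = m" "length b2 = m"
    and E: "\<forall>k. Er N A U k k {..<m} (\<lambda>i. b1 ! i) (\<lambda>i. b2 ! i)"
  shows "tp (expand N U) A b1 \<subseteq> tp (expand N U) A b2"
proof
  fix \<phi> assume "\<phi> \<in> tp (expand N U) A b1"
  then have \<phi>: "wff (expand N U) A \<phi>" "fvf \<phi> \<subseteq> {..<m}" "sat (expand N U) (\<lambda>i. b1 ! i) \<phi>"
    using b by (auto simp: tp_def)
  define K where "K = Suc (m + rk \<phi> + Max (insert 0 (bv \<phi>)))"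
  have bvK: "bv \<phi> \<subseteq> {..<K}"
  proof
    fix x assume "x \<in> bv \<phi>"
    then have "x \<le> Max (insert 0 (bv \<phi>))" using finite_bv[of \<phi>] by (intro Max_ge) auto
    then show "x \<in> {..<K}" by (simp add: K_def)
  qed
  have e1: "\<forall>x\<in>{..<m}. b1 ! x \<in> sdom N"
  proof
    fix x assume "x \<in> {..<m}"
    then have "b1 ! x \<in> set b1" using b(3) by simp
    then show "b1 ! x \<in> sdom N" using b(1) by auto
  qed
  have e2: "\<forall>x\<in>{..<m}. b2 ! x \<in> sdom N"
  proof
    fix x assume "x \<in> {..<m}"
    then have "b2 ! x \<in> set b2" using b(4) by simp
    then show "b2 ! x \<in> sdom N" using b(2) by auto
  qed
  have EK: "Er N A U K K {..<m} (\<lambda>i. b1 ! i) (\<lambda>i. b2 ! i)" using E by blast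
  have "sat (expand N U) (\<lambda>i. b1 ! i) \<phi> = sat (expand N U) (\<lambda>i. b2 ! i) \<phi>"
    by (rule sem[OF assms(1,2) \<phi>(1,2) _ _ bvK _ _ e1 e2 EK]) (auto simp: K_def)
  then show "\<phi> \<in> tp (expand N U) A b2" using \<phi> b by (auto simp: tp_def)
qed

theorem lemma4:
  fixes N :: "('f, 'r, 'a) struc" and A :: "'a set"
    and U :: "'k::finite \<Rightarrow> 'a set"
    and S :: "nat \<Rightarrow> 'u set"
  assumes "is_struc N" and "A \<subseteq> sdom N" and "\<forall>k. U k \<subseteq> sdom N"
    and "S 0 \<approx> rtp_set N A"
    and "\<forall>n. S (Suc n) \<approx> Pow (S n)"
  shows "rtp_set (expand N U) A \<lesssim> Pow (SIGMA n:UNIV. S n)"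
proof -
  let ?D = "sdom N - A"
  define inv where "inv k b = cls N A U k k {..<length b} (\<lambda>i. b ! i)" for k b
  define C where "C m k = CC N A U k k {..<m}" for m k
  have smallC: "small S (C m k)" for m k
    unfolding C_def using CC_small[OF assms(5) assms(4)] by blast
  have "\<forall>p. \<exists>j. C (fst (prod_decode p)) (snd (prod_decode p)) \<lesssim> S j"
    using smallC unfolding small_def by blast
  then obtain jj where jj: "\<And>p. C (fst (prod_decode p)) (snd (prod_decode p)) \<lesssim> S (jj p)" by metis
  define \<iota> where "\<iota> m k = iota jj (prod_encode (m, k))" for m k
  have CS: "C m k \<lesssim> S (\<iota> m k)" for m k
  proof -
    have "C m k \<lesssim> S (jj (prod_encode (m, k)))" using jj[of "prod_encode (m, k)"] by simp
    also have "\<dots> \<lesssim> S (\<iota> m k)" unfolding \<iota>_def by (rule S_mono[OF assms(5) iota_ge])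
    finally show ?thesis .
  qed
  have \<iota>_inj: "\<iota> m k = \<iota> m' k' \<Longrightarrow> m = m' \<and> k = k'" for m k m' k'
    unfolding \<iota>_def using strict_mono_eq[OF iota_smono] prod_encode_eq by blast
  have "\<forall>m k. \<exists>g. inj_on g (C m k) \<and> g ` C m k \<subseteq> S (\<iota> m k)"
    using CS unfolding lepoll_def by blast
  then obtain G where G: "\<And>m k. inj_on (G m k) (C m k)" "\<And>m k. G m k ` C m k \<subseteq> S (\<iota> m k)" by metis
  define rep where "rep \<tau> = (SOME b. b \<in> lists ?D \<and> tp (expand N U) A b = \<tau>)" for \<tau>
  have rep: "rep \<tau> \<in> lists ?D \<and> tp (expand N U) A (rep \<tau>) = \<tau>" if "\<tau> \<in> rtp_set (expand N U) A" for \<tau>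
  proof -
    have "\<exists>b. b \<in> lists ?D \<and> tp (expand N U) A b = \<tau>" using that by (auto simp: rtp_set_def)
    then show ?thesis unfolding rep_def by (rule someI_ex)
  qed
  have invC: "inv k b \<in> C (length b) k" if "b \<in> lists ?D" for k b
    using that unfolding inv_def C_def CC_def by (auto dest!: nth_mem)
  define F where "F \<tau> = {(\<iota> (length (rep \<tau>)) k, G (length (rep \<tau>)) k (inv k (rep \<tau>))) | k. True}" for \<tau>
  have "F ` rtp_set (expand N U) A \<subseteq> Pow (SIGMA n:UNIV. S n)"
  proof
    fix X assume "X \<in> F ` rtp_set (expand N U) A"
    then obtain \<tau> where \<tau>: "\<tau> \<in> rtp_set (expand N U) A" "X = F \<tau>" by auto
    have "G (length (rep \<tau>)) k (inv k (rep \<tau>)) \<in> S (\<iota> (length (rep \<tau>)) k)" for k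
      using G(2) invC rep[OF \<tau>(1)] by blast
    then show "X \<in> Pow (SIGMA n:UNIV. S n)" unfolding \<tau>(2) F_def by auto
  qed
  moreover have "inj_on F (rtp_set (expand N U) A)"
  proof (rule inj_onI)
    fix \<tau>1 \<tau>2 assume t: "\<tau>1 \<in> rtp_set (expand N U) A" "\<tau>2 \<in> rtp_set (expand N U) A" and FF: "F \<tau>1 = F \<tau>2"
    define b1 where "b1 = rep \<tau>1"
    define b2 where "b2 = rep \<tau>2"
    have b1: "b1 \<in> lists ?D" "tp (expand N U) A b1 = \<tau>1" using rep[OF t(1)] b1_def by auto
    have b2: "b2 \<in> lists ?D" "tp (expand N U) A b2 = \<tau>2" using rep[OF t(2)] b2_def by auto
    have mem: "(\<iota> (length b1) k, G (length b1) k (inv k b1)) \<in> F \<tau>2" for k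
    proof -
      have "(\<iota> (length b1) k, G (length b1) k (inv k b1)) \<in> F \<tau>1" unfolding F_def b1_def by blast
      then show ?thesis using FF by simp
    qed
    have "\<exists>k'. \<iota> (length b1) 0 = \<iota> (length b2) k'" using mem[of 0] unfolding F_def b2_def by auto
    then have len: "length b1 = length b2" using \<iota>_inj by blast
    have Er: "\<forall>k. Er N A U k k {..<length b1} (\<lambda>i. b1 ! i) (\<lambda>i. b2 ! i)"
    proof
      fix k
      obtain k' where k': "\<iota> (length b1) k = \<iota> (length b2) k'" "G (length b1) k (inv k b1) = G (length b2) k' (inv k' b2)"
        using mem[of k] unfolding F_def b2_def by auto
      then have "k' = k" using \<iota>_inj by blast
      then have "G (length b1) k (inv k b1) = G (length b1) k (inv k b2)" using k'(2) len by simp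
      moreover have "inv k b1 \<in> C (length b1) k" "inv k b2 \<in> C (length b1) k"
        using invC b1(1) b2(1) len by metis+
      ultimately have "inv k b1 = inv k b2" using G(1) by (meson inj_onD)
      then show "Er N A U k k {..<length b1} (\<lambda>i. b1 ! i) (\<lambda>i. b2 ! i)"
        unfolding inv_def using len by (simp add: cls_eq_iff)
    qed
    have "tp (expand N U) A b1 \<subseteq> tp (expand N U) A b2"
      by (rule all_Er_tp[OF assms(1,2) b1(1) b2(1) refl len[symmetric] Er])
    moreover have "tp (expand N U) A b2 \<subseteq> tp (expand N U) A b1"
      by (rule all_Er_tp[OF assms(1,2) b2(1) b1(1) len[symmetric] refl]) (use Er Er_sym in blast)
    ultimately show "\<tau>1 = \<tau>2" using b1(2) b2(2) by simp
  qed
  ultimately show ?thesis unfolding lepoll_def by blast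
qed

end
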